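(* Let the matrices $E^{(0,1,1)},E^{(1,0,1)},E^{(1,1,0)},E^{(1,1,1)},D^{(2)}$ and the difference matrices $\mathfrak D_q,\mathfrak D_{q,\mathrm{per}}$ be as in the context. For every $\mathbf h\in\mathbb R^{n_2}$, set $\mathbf h^1=(E^{(0,1,1)})^T\mathbf h\in\mathbb R^{n^r(n^s-1)n^t}$, $\mathbf h^2=(E^{(1,0,1)})^T\mathbf h\in\mathbb R^{n^rn^sn^t}$, $\mathbf h^3=(E^{(1,1,0)})^T\mathbf h\in\mathbb R^{n^r(n^s-1)n^t}$. Then $$(I_{n^t}\otimes I_{n^s-1}\otimes\mathfrak D_{n^r,\mathrm{per}})\mathbf h^1+(I_{n^t}\otimes\mathfrak D_{n^s}\otimes I_{n^r})\mathbf h^2+(\mathfrak D_{n^t,\mathrm{per}}\otimes I_{n^s-1}\otimes I_{n^r})\mathbf h^3=(E^{(1,1,1)})^TD^{(2)}\mathbf h .$$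
   Context: Fix integers $n^r,n^s,n^t$ (large enough for all index ranges to make sense). Put $\bar n_1=2n^r(n^s-2)+2$, $\bar n_2=n^r(n^s-2)$, $n_2=n^t(\bar n_1+\bar n_2)$, $n_3=n^t\bar n_2$. Let $\theta_i=2\pi+\frac{(1-2i)\pi}{n^r}$ and, for $i=1,\dots,n^r$, $\bar E_{\ell,(i,1)}=\frac13$ ($\ell=1,2,3$), $\bar E_{1,(i,2)}=\frac13+\frac13\cos\theta_i$, $\bar E_{2,(i,2)}=\frac13-\frac16\cos\theta_i+\frac{\sqrt3}6\sin\theta_i$, $\bar E_{3,(i,2)}=\frac13-\frac16\cos\theta_i-\frac{\sqrt3}6\sin\theta_i$; set $\bar E_{\ell,(n^r+1,2)}:=\bar E_{\ell,(1,2)}$ and $\bar E_{\ell,(\Delta i,2)}:=\bar E_{\ell,(i+1,2)}-\bar E_{\ell,(i,2)}$. $E^{(1,0)}$ ($\bar n_1\times n^rn^s$): $y=E^{(1,0)}x$ has $y_\ell=\sum_{i=1}^{n^r}\bar E_{\ell+1,(\Delta i,2)}x_{i+n^r}$ ($\ell=1,2$) and, for $j=3,\dots,n^s$, $i=1,\dots,n^r$, $y_{2+i+(2j-6)n^r}=0$, $y_{2+i+(2j-5)n^r}=x_{i+(j-1)n^r}$. $E^{(0,1)}$ ($\bar n_1\times n^r(n^s-1)$): $y=E^{(0,1)}x$ has $y_\ell=\sum_{i=1}^{n^r}(\bar E_{\ell+1,(i,2)}-\bar E_{\ell+1,(i,1)})x_i$ ($\ell=1,2$) and, for $j=2,\dots,n^s-1$,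 $i=1,\dots,n^r$, $y_{2+i+(2j-4)n^r}=x_{i+(j-1)n^r}$, $y_{2+i+(2j-3)n^r}=0$. $E^{(2)}=[0_{\bar n_2\times n^r}\,|\,I_{\bar n_2}]$. With $[A;B]$ vertical stacking and $0_{a\times b}$ zero matrices: $E^{(0,1,1)}=I_{n^t}\otimes[0_{\bar n_2\times n^r(n^s-1)};E^{(0,1)}]$, $E^{(1,0,1)}=I_{n^t}\otimes[0_{\bar n_2\times n^rn^s};-E^{(1,0)}]$, $E^{(1,1,0)}=I_{n^t}\otimes[E^{(2)};0_{\bar n_1\times n^r(n^s-1)}]$, $E^{(1,1,1)}=I_{n^t}\otimes E^{(2)}$. Difference matrices: $\mathfrak D_q$ is $(q-1)\times q$ with row $j$ having $-1$ in column $j$ and $1$ in column $j+1$; $\mathfrak D_{q,\mathrm{per}}$ is $q\times q$ with row $j<q$ having $-1$ in column $j$ and $1$ in column $j+1$, and last row having $1$ in column $1$ and $-1$ in column $q$. $D^{(2)}$ is the $n_3\times n_2$ matrix with $\mathbf m=D^{(2)}\mathbf h$ given as follows. Let $\sigma(i)=i+1$ for $i<n^r$, $\sigma(n^r)=1$. For $k=1,\dots,n^t$ put $c=k\bar n_2+(k-1)\bar n_1$, $d=(k-1)(\bar n_1+\bar n_2)$, $d'=k(\bar n_1+\bar n_2)$, with the convention that an index $n_2+q$ means $q$. For $i=1,\dots,n^r$: $m_{i+(k-1)\bar n_2}=h_{2+\sigma(i)+c}-h_{2+i+c}-h_{2+i+n^r+c}+\sum_{\ell=1}^2\bar E_{\ell+1,(\Delta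 i,2)}h_{\ell+c}+h_{i+d'}-h_{i+d}$; and for $j=2,\dots,n^s-2$, $i=1,\dots,n^r$: $m_{i+(j-1)n^r+(k-1)\bar n_2}=h_{2+\sigma(i)+(2j-2)n^r+c}-h_{2+i+(2j-2)n^r+c}-h_{2+i+(2j-1)n^r+c}+h_{2+i+(2j-3)n^r+c}+h_{i+(j-1)n^r+d'}-h_{i+(j-1)n^r+d}$. *)

theory Defs
  imports Complex_Main "Jordan_Normal_Form.Matrix"
begin

text \<open>The paper uses 1-based indices; entry (a,b) of a paper matrix (1-based) is stored at
  position (a-1,b-1). Parameters: nr = n^r, ns = n^s, nt = n^t.\<close>

definition nbar1 :: "nat \<Rightarrow> nat \<Rightarrow> nat" where
  "nbar1 nr ns = 2 * nr * (ns - 2) + 2"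
definition nbar2 :: "nat \<Rightarrow> nat \<Rightarrow> nat" where
  "nbar2 nr ns = nr * (ns - 2)"
definition nn2 :: "nat \<Rightarrow> nat \<Rightarrow> nat \<Rightarrow> nat" where
  "nn2 nr ns nt = nt * (nbar1 nr ns + nbar2 nr ns)"
definition nn3 :: "nat \<Rightarrow> nat \<Rightarrow> nat \<Rightarrow> nat" where
  "nn3 nr ns nt = nt * nbar2 nr ns"

definition theta :: "nat \<Rightarrow> nat \<Rightarrow> real" where
  "theta nr i = 2 * pi + (1 - 2 * real i) * pi / real nr"

text \<open>\<open>Ebar1 l i\<close> is \<open>\<bar>E\<close>_{l,(i,1)}; \<open>Ebar2 nr l i\<close> is \<open>\<bar>E\<close>_{l,(i,2)} for i = 1..nr,
  with the convention \<open>\<bar>E\<close>_{l,(nr+1,2)} = \<open>\<bar>E\<close>_{l,(1,2)}.\<close>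
definition Ebar1 :: "nat \<Rightarrow> nat \<Rightarrow> real" where
  "Ebar1 l i = 1 / 3"

definition Ebar2 :: "nat \<Rightarrow> nat \<Rightarrow> nat \<Rightarrow> real" where
  "Ebar2 nr l i = (let t = theta nr (if i = nr + 1 then 1 else i) in
     if l = 1 then 1/3 + 1/3 * cos t
     else if l = 2 then 1/3 - 1/6 * cos t + sqrt 3 / 6 * sin t
     else if l = 3 then 1/3 - 1/6 * cos t - sqrt 3 / 6 * sin t
     else 0)"

definition EbarD :: "nat \<Rightarrow> nat \<Rightarrow> nat \<Rightarrow> real" where
  "EbarD nr l i = Ebar2 nr l (i + 1) - Ebar2 nr l i"

definition kron :: "real mat \<Rightarrow> real mat \<Rightarrow> real mat" where
  "kron A B = mat (dim_row A * dim_row B) (dim_col A * dim_col B)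
     (\<lambda>(i, j). A $$ (i div dim_row B, j div dim_col B) * B $$ (i mod dim_row B, j mod dim_col B))"

definition vstack :: "real mat \<Rightarrow> real mat \<Rightarrow> real mat" where
  "vstack A B = mat (dim_row A + dim_row B) (dim_col A)
     (\<lambda>(i, j). if i < dim_row A then A $$ (i, j) else B $$ (i - dim_row A, j))"

definition hstack :: "real mat \<Rightarrow> real mat \<Rightarrow> real mat" where
  "hstack A B = mat (dim_row A) (dim_col A + dim_col B)
     (\<lambda>(i, j). if j < dim_col A then A $$ (i, j) else B $$ (i, j - dim_col A))"

text \<open>Entries (1-based) of E^(1,0) and E^(0,1), read off from the description y = E x.\<close>
definition E10_entry :: "nat \<Rightarrow> nat \<Rightarrow> nat \<Rightarrow> nat \<Rightarrow> real" where
  "E10_entry nr ns a b =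
     (if a = 1 \<or> a = 2 then (if nr < b \<and> b \<le> 2 * nr then EbarD nr (a + 1) (b - nr) else 0)
      else if (\<exists>j\<in>{3..ns}. \<exists>i\<in>{1..nr}. a = 2 + i + (2 * j - 5) * nr \<and> b = i + (j - 1) * nr)
      then 1 else 0)"

definition E10 :: "nat \<Rightarrow> nat \<Rightarrow> real mat" where
  "E10 nr ns = mat (nbar1 nr ns) (nr * ns) (\<lambda>(a, b). E10_entry nr ns (a + 1) (b + 1))"

definition E01_entry :: "nat \<Rightarrow> nat \<Rightarrow> nat \<Rightarrow> nat \<Rightarrow> real" where
  "E01_entry nr ns a b =
     (if a = 1 \<or> a = 2 then (if 1 \<le> b \<and> b \<le> nr then Ebar2 nr (a + 1) b - Ebar1 (a + 1) b else 0)
      else if (\<exists>j\<in>{2..ns - 1}. \<exists>i\<in>{1..nr}. a = 2 + i + (2 * j - 4) * nr \<and> b = i + (j - 1) * nr)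
      then 1 else 0)"

definition E01 :: "nat \<Rightarrow> nat \<Rightarrow> real mat" where
  "E01 nr ns = mat (nbar1 nr ns) (nr * (ns - 1)) (\<lambda>(a, b). E01_entry nr ns (a + 1) (b + 1))"

definition E2 :: "nat \<Rightarrow> nat \<Rightarrow> real mat" where
  "E2 nr ns = hstack (0\<^sub>m (nbar2 nr ns) nr) (1\<^sub>m (nbar2 nr ns))"

definition E011 :: "nat \<Rightarrow> nat \<Rightarrow> nat \<Rightarrow> real mat" where
  "E011 nr ns nt = kron (1\<^sub>m nt) (vstack (0\<^sub>m (nbar2 nr ns) (nr * (ns - 1))) (E01 nr ns))"

definition E101 :: "nat \<Rightarrow> nat \<Rightarrow> nat \<Rightarrow> real mat" where
  "E101 nr ns nt = kron (1\<^sub>m nt) (vstack (0\<^sub>m (nbar2 nr ns) (nr * ns)) (- E10 nr ns))"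

definition E110 :: "nat \<Rightarrow> nat \<Rightarrow> nat \<Rightarrow> real mat" where
  "E110 nr ns nt = kron (1\<^sub>m nt) (vstack (E2 nr ns) (0\<^sub>m (nbar1 nr ns) (nr * (ns - 1))))"

definition E111 :: "nat \<Rightarrow> nat \<Rightarrow> nat \<Rightarrow> real mat" where
  "E111 nr ns nt = kron (1\<^sub>m nt) (E2 nr ns)"

definition Ddiff :: "nat \<Rightarrow> real mat" where
  "Ddiff q = mat (q - 1) q (\<lambda>(r, c). if c = r then -1 else if c = r + 1 then 1 else 0)"

definition Dper :: "nat \<Rightarrow> real mat" where
  "Dper q = mat q q (\<lambda>(r, c).
     if r + 1 < q then (if c = r then -1 else if c = r + 1 then 1 else 0)
     else (if c = 0 then 1 else 0) - (if c = q - 1 then 1 else 0))"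

text \<open>The linear map h \<mapsto> m = D^(2) h, with 1-based vectors h, m :: nat \<Rightarrow> real.
  An index nn2 + q stands for q.\<close>
definition D2map :: "nat \<Rightarrow> nat \<Rightarrow> nat \<Rightarrow> (nat \<Rightarrow> real) \<Rightarrow> nat \<Rightarrow> real" where
  "D2map nr ns nt h r =
    (let b1 = nbar1 nr ns; b2 = nbar2 nr ns; N2 = nn2 nr ns nt;
         k = (r - 1) div b2 + 1; rm = (r - 1) mod b2;
         j = rm div nr + 1; i = rm mod nr + 1;
         c = k * b2 + (k - 1) * b1; d = (k - 1) * (b1 + b2); d' = k * (b1 + b2);
         H = (\<lambda>q. h (if q > N2 then q - N2 else q));
         \<sigma> = (\<lambda>i. if i < nr then i + 1 else 1)
     in if j = 1 then
          H (2 + \<sigma> i + c) - H (2 + i + c) - H (2 + i + nr + c)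
          + (\<Sum>l\<in>{1..2}. EbarD nr (l + 1) i * H (l + c))
          + H (i + d') - H (i + d)
        else
          H (2 + \<sigma> i + (2 * j - 2) * nr + c) - H (2 + i + (2 * j - 2) * nr + c)
          - H (2 + i + (2 * j - 1) * nr + c) + H (2 + i + (2 * j - 3) * nr + c)
          + H (i + (j - 1) * nr + d') - H (i + (j - 1) * nr + d))"

definition D2 :: "nat \<Rightarrow> nat \<Rightarrow> nat \<Rightarrow> real mat" where
  "D2 nr ns nt = mat (nn3 nr ns nt) (nn2 nr ns nt)
     (\<lambda>(r, q). D2map nr ns nt (\<lambda>p. if p = q + 1 then 1 else 0) (r + 1))"

end

theory Submission
  imports Defs
begin


lemma sum_split_mult: "(\<Sum>e<m*q. (g e :: real)) = (\<Sum>c<m. \<Sum>d<q. g (c*q+d :: nat))"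
proof (induction m)
  case 0 then show ?case by simp
next
  case (Suc m)
  have "(\<Sum>e<Suc m*q. g e) = (\<Sum>e<m*q. g e) + (\<Sum>e\<in>{m*q..<m*q+q}. g e)"
    by (simp add: sum.atLeastLessThan_concat[symmetric] lessThan_atLeast0 add.commute)
  also have "(\<Sum>e\<in>{m*q..<m*q+q}. g e) = (\<Sum>d<q. g (m*q+d))"
    using sum.shift_bounds_nat_ivl[of g 0 "m*q" q] by (simp add: lessThan_atLeast0 add.commute)
  finally show ?case using Suc by simp
qed

lemma mv_sum: "i < dim_row A \<Longrightarrow> dim_vec x = dim_col A \<Longrightarrow>
  (A *\<^sub>v x) $ i = (\<Sum>j<dim_col A. A $$ (i,j) * x $ j)"
  by (simp add: scalar_prod_def lessThan_atLeast0)

lemma tmv_sum: "j < dim_col A \<Longrightarrow> dim_vec x = dim_row A \<Longrightarrow>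
  (transpose_mat A *\<^sub>v x) $ j = (\<Sum>i<dim_row A. A $$ (i,j) * x $ i)"
  by (simp add: scalar_prod_def lessThan_atLeast0)

lemma dim_kron[simp]: "dim_row (kron A B) = dim_row A * dim_row B" "dim_col (kron A B) = dim_col A * dim_col B"
  by (simp_all add: kron_def)

lemma idx_less: "a < (n::nat) \<Longrightarrow> b < p \<Longrightarrow> a * p + b < n * p"
proof -
  assume "a < n" "b < p"
  then have "a * p + b < (a+1) * p" by simp
  also have "\<dots> \<le> n * p" using \<open>a < n\<close> by (intro mult_le_mono1) simp
  finally show ?thesis .
qed

lemma kron_index: "a < dim_row A \<Longrightarrow> b < dim_row B \<Longrightarrow> c < dim_col A \<Longrightarrow> d < dim_col B \<Longrightarrow>
  kron A B $$ (a * dim_row B + b, c * dim_col B + d) = A $$ (a,c) * B $$ (b,d)"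
  by (simp add: kron_def idx_less)

lemma kron_index': "A \<in> carrier_mat n m \<Longrightarrow> B \<in> carrier_mat p q \<Longrightarrow> a < n \<Longrightarrow> b < p \<Longrightarrow> c < m \<Longrightarrow> d < q \<Longrightarrow>
  kron A B $$ (a * p + b, c * q + d) = A $$ (a,c) * B $$ (b,d)"
  using kron_index[of a A b B c d] by auto

lemma kron_row_sum:
  assumes "A \<in> carrier_mat n m" "B \<in> carrier_mat p q" "a < n" "b < p"
  shows "(\<Sum>e<m*q. kron A B $$ (a*p+b, e) * g e) = (\<Sum>c<m. A $$ (a,c) * (\<Sum>d<q. B $$ (b,d) * g (c*q+d)))"
  using assms by (simp add: sum_split_mult kron_index' sum_distrib_left mult.assoc)

lemma kron_col_sum:
  assumes "A \<in> carrier_mat n m" "B \<in> carrier_mat p q" "c < m" "d < q"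
  shows "(\<Sum>e<n*p. kron A B $$ (e, c*q+d) * g e) = (\<Sum>a<n. A $$ (a,c) * (\<Sum>b<p. B $$ (b,d) * g (a*p+b)))"
  using assms by (simp add: sum_split_mult kron_index' sum_distrib_left mult.assoc)

lemma delta_sum': "(\<Sum>a<(n::nat). (if a = i then 1 else 0) * g a) = (if i < n then g i else 0 :: real)"
proof -
  have "(\<Sum>a<n. (if a = i then 1 else 0) * g a) = (\<Sum>a<n. if a = i then g a else 0)" by (intro sum.cong) auto
  also have "\<dots> = (if i < n then g i else 0)" by (subst sum.delta) auto
  finally show ?thesis .
qed
lemma delta_sum: "i < (n::nat) \<Longrightarrow> (\<Sum>a<n. (if a = i then 1 else 0) * g a) = (g i :: real)"
  by (simp add: delta_sum')
lemma id_row_sum: "i < n \<Longrightarrow> (\<Sum>a<n. 1\<^sub>m n $$ (i,a) * g a) = (g i :: real)"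
  by (subst sum.cong[OF refl, of _ _ "\<lambda>a. (if a = i then 1 else 0) * g a"]) (auto simp: delta_sum)
lemma id_col_sum: "i < n \<Longrightarrow> (\<Sum>a<n. 1\<^sub>m n $$ (a,i) * g a) = (g i :: real)"
  by (subst sum.cong[OF refl, of _ _ "\<lambda>a. (if a = i then 1 else 0) * g a"]) (auto simp: delta_sum)

lemma Dper_sum: assumes "k < q"
  shows "(\<Sum>a<q. Dper q $$ (k,a) * g a) = g (if k+1 < q then k+1 else 0) - g k"
proof -
  have "(\<Sum>a<q. Dper q $$ (k,a) * g a) = (\<Sum>a<q. ((if a = (if k+1 < q then k+1 else 0) then 1 else 0) - (if a = k then 1 else 0)) * g a)"
    using assms by (intro sum.cong) (auto simp: Dper_def)
  also have "\<dots> = g (if k+1 < q then k+1 else 0) - g k"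
    using assms by (simp add: left_diff_distrib sum_subtractf delta_sum)
  finally show ?thesis .
qed

lemma Ddiff_sum: assumes "k + 1 < q"
  shows "(\<Sum>a<q. Ddiff q $$ (k,a) * g a) = g (k+1) - g k"
proof -
  have "(\<Sum>a<q. Ddiff q $$ (k,a) * g a) = (\<Sum>a<q. ((if a = k+1 then 1 else 0) - (if a = k then 1 else 0)) * g a)"
    using assms by (intro sum.cong) (auto simp: Ddiff_def)
  also have "\<dots> = g (k+1) - g k"
    using assms by (simp add: left_diff_distrib sum_subtractf delta_sum)
  finally show ?thesis .
qed

lemma vstack_col_sum: assumes "d < dim_col A"
  shows "(\<Sum>b<dim_row A + dim_row B. vstack A B $$ (b,d) * g b)
    = (\<Sum>b<dim_row A. A $$ (b,d) * g b) + (\<Sum>b<dim_row B. B $$ (b,d) * g (dim_row A + b))"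
proof -
  have "(\<Sum>b<dim_row A + dim_row B. vstack A B $$ (b,d) * g b)
     = (\<Sum>b<dim_row A. vstack A B $$ (b,d) * g b) + (\<Sum>b\<in>{dim_row A..<dim_row A + dim_row B}. vstack A B $$ (b,d) * g b)"
    by (simp add: sum.atLeastLessThan_concat[symmetric] lessThan_atLeast0)
  also have "(\<Sum>b\<in>{dim_row A..<dim_row A + dim_row B}. vstack A B $$ (b,d) * g b)
      = (\<Sum>b<dim_row B. vstack A B $$ (dim_row A + b,d) * g (dim_row A + b))"
    using sum.shift_bounds_nat_ivl[of "\<lambda>b. vstack A B $$ (b,d) * g b" 0 "dim_row A" "dim_row B"]
    by (simp add: lessThan_atLeast0 add.commute)
  finally show ?thesis using assms by (simp add: vstack_def)
qed


lemma uniq_dm: "i < (R::nat) \<Longrightarrow> i' < R \<Longrightarrow> j*R + i = j'*R + i' \<Longrightarrow> j = j' \<and> i = i'"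
proof -
  assume a: "i < R" "i' < R" "j*R + i = j'*R + i'"
  have "j = (j*R+i) div R" using a(1) by simp
  also have "\<dots> = (j'*R+i') div R" using a(3) by simp
  also have "\<dots> = j'" using a(2) by simp
  finally have 1: "j = j'" .
  have "i = (j*R+i) mod R" using a(1) by simp
  also have "\<dots> = (j'*R+i') mod R" using a(3) by simp
  also have "\<dots> = i'" using a(2) by simp
  finally show ?thesis using 1 by simp
qed

lemma E01_ex: fixes i R j S a :: nat assumes "i < R"
  shows "(\<exists>j'\<in>{2..S-1}. \<exists>i'\<in>{1..R}. a = 2 + i' + (2 * j' - 4) * R \<and> j*R+i+1 = i' + (j' - 1) * R)
     \<longleftrightarrow> (1 \<le> j \<and> j + 2 \<le> S \<and> a = 3 + i + 2*(j-1)*R)"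
proof
  assume "\<exists>j'\<in>{2..S-1}. \<exists>i'\<in>{1..R}. a = 2 + i' + (2 * j' - 4) * R \<and> j*R+i+1 = i' + (j' - 1) * R"
  then obtain j' i' where h: "j'\<in>{2..S-1}" "i'\<in>{1..R}" "a = 2 + i' + (2 * j' - 4) * R" "j*R+i+1 = i' + (j' - 1) * R" by blast
  obtain jj ii where jj: "j' = jj + 2" "i' = ii + 1" using h(1,2) by (metis add.commute atLeastAtMost_iff le_Suc_ex one_add_one plus_1_eq_Suc)
  have "j*R+i = (jj+1)*R + ii" using h(4) jj by simp
  then have "j = jj+1 \<and> i = ii" using uniq_dm[of i R ii j "jj+1"] h jj assms by auto
  then show "1 \<le> j \<and> j + 2 \<le> S \<and> a = 3 + i + 2*(j-1)*R" using h jj by auto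
next
  assume h: "1 \<le> j \<and> j + 2 \<le> S \<and> a = 3 + i + 2*(j-1)*R"
  then obtain j0 where j0: "j = j0 + 1" by (metis add.commute le_Suc_ex plus_1_eq_Suc)
  have "j0+2 \<in> {2..S-1}" "i+1 \<in> {1..R}" using h j0 assms by auto
  moreover have "a = 2 + (i+1) + (2 * (j0+2) - 4) * R \<and> j*R+i+1 = (i+1) + ((j0+2) - 1) * R"
    using h j0 by (simp add: algebra_simps)
  ultimately show "\<exists>j'\<in>{2..S-1}. \<exists>i'\<in>{1..R}. a = 2 + i' + (2 * j' - 4) * R \<and> j*R+i+1 = i' + (j' - 1) * R"
    by blast
qed

lemma E10_ex: fixes i R j S a :: nat assumes "i < R"
  shows "(\<exists>j'\<in>{3..S}. \<exists>i'\<in>{1..R}. a = 2 + i' + (2 * j' - 5) * R \<and> j*R+i+1 = i' + (j' - 1) * R)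
     \<longleftrightarrow> (2 \<le> j \<and> j + 1 \<le> S \<and> a = 3 + i + (2*j-3)*R)"
proof
  assume "\<exists>j'\<in>{3..S}. \<exists>i'\<in>{1..R}. a = 2 + i' + (2 * j' - 5) * R \<and> j*R+i+1 = i' + (j' - 1) * R"
  then obtain j' i' where h: "j'\<in>{3..S}" "i'\<in>{1..R}" "a = 2 + i' + (2 * j' - 5) * R" "j*R+i+1 = i' + (j' - 1) * R" by blast
  obtain jj ii where jj: "j' = jj + 3" "i' = ii + 1" using h(1,2)
    by (metis add.commute atLeastAtMost_iff le_Suc_ex plus_1_eq_Suc)
  have "j*R+i = (jj+2)*R + ii" using h(4) jj by simp
  then have "j = jj+2 \<and> i = ii" using uniq_dm[of i R ii j "jj+2"] h jj assms by auto
  then show "2 \<le> j \<and> j + 1 \<le> S \<and> a = 3 + i + (2*j-3)*R" using h jj by auto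
next
  assume h: "2 \<le> j \<and> j + 1 \<le> S \<and> a = 3 + i + (2*j-3)*R"
  then obtain j0 where j0: "j = j0 + 2" by (metis add.commute le_Suc_ex)
  have "j0+3 \<in> {3..S}" "i+1 \<in> {1..R}" using h j0 assms by auto
  moreover have "a = 2 + (i+1) + (2 * (j0+3) - 5) * R \<and> j*R+i+1 = (i+1) + ((j0+3) - 1) * R"
    using h j0 by (simp add: algebra_simps)
  ultimately show "\<exists>j'\<in>{3..S}. \<exists>i'\<in>{1..R}. a = 2 + i' + (2 * j' - 5) * R \<and> j*R+i+1 = i' + (j' - 1) * R"
    by blast
qed


lemma E01_carrier: "E01 R S \<in> carrier_mat (nbar1 R S) (R * (S - 1))"
  by (simp add: E01_def)
lemma E10_carrier: "E10 R S \<in> carrier_mat (nbar1 R S) (R * S)"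
  by (simp add: E10_def)

lemma E01_entry_col:
  assumes "i < R" "j + 1 < S" "b < nbar1 R S"
  shows "E01 R S $$ (b, j*R+i) = (if j = 0 then (if b = 0 then 1 else 0) * (Ebar2 R 2 (i+1) - 1/3)
     + (if b = 1 then 1 else 0) * (Ebar2 R 3 (i+1) - 1/3) else (if b = 2 + i + 2*(j-1)*R then 1 else 0))"
proof -
  have jr: "j*R+i < R * (S - 1)"
  proof -
    have "j*R + i < j*R + R" using assms by simp
    also have "\<dots> = (j+1)*R" by simp
    also have "\<dots> \<le> (S-1)*R" using assms by (intro mult_le_mono1) simp
    finally show ?thesis by (simp add: mult.commute)
  qed
  have e: "E01 R S $$ (b, j*R+i) = E01_entry R S (b+1) (j*R+i+1)"
    using assms jr by (simp add: E01_def)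
  have le: "j*R+i+1 \<le> R \<longleftrightarrow> j = 0"
  proof
    assume "j*R+i+1 \<le> R" then show "j = 0" using assms by (cases j) auto
  qed (use assms in simp)
  show ?thesis
  proof (cases "b < 2")
    case True
    then have "b = 0 \<or> b = 1" by auto
    then show ?thesis
    proof
      assume b: "b = 0"
      have "E01_entry R S 1 (j*R+i+1) = (if j = 0 then Ebar2 R 2 (i+1) - 1/3 else 0)"
        unfolding E01_entry_def using le by (simp add: Ebar1_def numeral_2_eq_2)
      then show ?thesis using e b by simp
    next
      assume b: "b = 1"
      have "E01_entry R S 2 (j*R+i+1) = (if j = 0 then Ebar2 R 3 (i+1) - 1/3 else 0)"
        unfolding E01_entry_def using le by (simp add: Ebar1_def numeral_3_eq_3)
      then show ?thesis using e b by (simp add: numeral_2_eq_2)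
    qed
  next
    case False
    then have "\<not> (b+1 = 1 \<or> b+1 = 2)" by auto
    then have "E01_entry R S (b+1) (j*R+i+1) = (if 1 \<le> j \<and> j + 2 \<le> S \<and> b+1 = 3 + i + 2*(j-1)*R then 1 else 0)"
      unfolding E01_entry_def using E01_ex[OF assms(1), of S "b+1" j] by simp
    then show ?thesis using e False assms by auto
  qed
qed

lemma E01_col:
  assumes "i < R" "j + 1 < S"
  shows "(\<Sum>b<nbar1 R S. E01 R S $$ (b, j*R+i) * g b) = (if j = 0 then (Ebar2 R 2 (i+1) - 1/3) * g 0
     + (Ebar2 R 3 (i+1) - 1/3) * g 1 else g (2 + i + 2*(j-1)*R))"
proof -
  have n1: "1 < nbar1 R S" using assms by (simp add: nbar1_def)
  have "(\<Sum>b<nbar1 R S. E01 R S $$ (b, j*R+i) * g b) = (\<Sum>b<nbar1 R S. (if j = 0 then (if b = 0 then 1 else 0) * (Ebar2 R 2 (i+1) - 1/3)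
     + (if b = 1 then 1 else 0) * (Ebar2 R 3 (i+1) - 1/3) else (if b = 2 + i + 2*(j-1)*R then 1 else 0)) * g b)"
    using assms by (intro sum.cong refl) (simp add: E01_entry_col)
  also have "\<dots> = (if j = 0 then (Ebar2 R 2 (i+1) - 1/3) * g 0
     + (Ebar2 R 3 (i+1) - 1/3) * g 1 else g (2 + i + 2*(j-1)*R))"
  proof (cases "j = 0")
    case True
    then show ?thesis using n1
      by (simp add: distrib_right sum.distrib mult.assoc delta_sum)
  next
    case False
    define j0 where "j0 = j - 1"
    define S0 where "S0 = S - 3"
    have j0: "j = j0 + 1" using False j0_def by simp
    have S0: "S = S0 + 3" using assms j0 S0_def by simp
    have p: "R * j0 \<le> R * S0" using assms j0 S0 by (intro mult_le_mono2) simp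
    have q1: "2 + i + 2*(j-1)*R = 2 + i + 2*(R*j0)" by (simp add: j0 algebra_simps)
    have q2: "nbar1 R S = 2 + 2*R + 2*(R*S0)" by (simp add: nbar1_def S0 algebra_simps)
    have "2 + i + 2*(j-1)*R < nbar1 R S" unfolding q1 q2 using p assms(1) by linarith
    then show ?thesis using False by (simp add: delta_sum)
  qed
  finally show ?thesis .
qed


lemma E10_entry_col:
  assumes "i < R" "j < S" "b < nbar1 R S"
  shows "E10 R S $$ (b, j*R+i) = (if j = 1 then (if b = 0 then 1 else 0) * EbarD R 2 (i+1)
     + (if b = 1 then 1 else 0) * EbarD R 3 (i+1) else if 2 \<le> j then (if b = 2 + i + (2*j-3)*R then 1 else 0) else 0)"
proof -
  have jr: "j*R+i < R * S"
  proof -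
    have "j*R + i < j*R + R" using assms by simp
    also have "\<dots> = (j+1)*R" by simp
    also have "\<dots> \<le> S*R" using assms by (intro mult_le_mono1) simp
    finally show ?thesis by (simp add: mult.commute)
  qed
  have e: "E10 R S $$ (b, j*R+i) = E10_entry R S (b+1) (j*R+i+1)"
    using assms jr by (simp add: E10_def)
  have le: "R < j*R+i+1 \<and> j*R+i+1 \<le> 2*R \<longleftrightarrow> j = 1"
  proof
    assume a: "R < j*R+i+1 \<and> j*R+i+1 \<le> 2*R"
    show "j = 1"
    proof (cases j)
      case 0 then show ?thesis using a assms by simp
    next
      case (Suc j1) then show ?thesis using a assms by (cases j1) auto
    qed
  qed (use assms in simp)
  have sub: "j = 1 \<Longrightarrow> j*R+i+1 - R = i+1" by simp
  show ?thesis
  proof (cases "b < 2")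
    case True
    then have "b = 0 \<or> b = 1" by auto
    then show ?thesis
    proof
      assume b: "b = 0"
      have "E10_entry R S 1 (j*R+i+1) = (if j = 1 then EbarD R 2 (i+1) else 0)"
        unfolding E10_entry_def using le sub by (simp add: numeral_2_eq_2)
      then show ?thesis using e b by simp
    next
      assume b: "b = 1"
      have "E10_entry R S 2 (j*R+i+1) = (if j = 1 then EbarD R 3 (i+1) else 0)"
        unfolding E10_entry_def using le sub by (simp add: numeral_3_eq_3)
      then show ?thesis using e b by (simp add: numeral_2_eq_2)
    qed
  next
    case False
    then have "\<not> (b+1 = 1 \<or> b+1 = 2)" by auto
    then have "E10_entry R S (b+1) (j*R+i+1) = (if 2 \<le> j \<and> j + 1 \<le> S \<and> b+1 = 3 + i + (2*j-3)*R then 1 else 0)"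
      unfolding E10_entry_def using E10_ex[OF assms(1), of S "b+1" j] by simp
    then show ?thesis using e False assms by auto
  qed
qed

lemma E10_col:
  assumes "i < R" "j < S" "3 \<le> S"
  shows "(\<Sum>b<nbar1 R S. E10 R S $$ (b, j*R+i) * g b) = (if j = 1 then EbarD R 2 (i+1) * g 0
     + EbarD R 3 (i+1) * g 1 else if 2 \<le> j then g (2 + i + (2*j-3)*R) else 0)"
proof -
  have n1: "1 < nbar1 R S" using assms by (simp add: nbar1_def)
  have "(\<Sum>b<nbar1 R S. E10 R S $$ (b, j*R+i) * g b) = (\<Sum>b<nbar1 R S. (if j = 1 then (if b = 0 then 1 else 0) * EbarD R 2 (i+1)
     + (if b = 1 then 1 else 0) * EbarD R 3 (i+1) else if 2 \<le> j then (if b = 2 + i + (2*j-3)*R then 1 else 0) else 0) * g b)"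
    using assms by (intro sum.cong refl) (simp add: E10_entry_col)
  also have "\<dots> = (if j = 1 then EbarD R 2 (i+1) * g 0
     + EbarD R 3 (i+1) * g 1 else if 2 \<le> j then g (2 + i + (2*j-3)*R) else 0)"
  proof (cases "j = 1")
    case True
    then show ?thesis using n1
      by (simp add: distrib_right sum.distrib mult.assoc delta_sum)
  next
    case False
    show ?thesis
    proof (cases "2 \<le> j")
      case True
      define j0 where "j0 = j - 2"
      define S0 where "S0 = S - 3"
      have j0: "j = j0 + 2" using True j0_def by simp
      have S0: "S = S0 + 3" using assms S0_def by simp
      have p: "R * j0 \<le> R * S0" using assms j0 S0 by (intro mult_le_mono2) simp
      have q1: "2 + i + (2*j-3)*R = 2 + i + R + 2*(R*j0)" by (simp add: j0 algebra_simps)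
      have q2: "nbar1 R S = 2 + 2*R + 2*(R*S0)" by (simp add: nbar1_def S0 algebra_simps)
      have "2 + i + (2*j-3)*R < nbar1 R S" unfolding q1 q2 using p assms(1) by linarith
      then show ?thesis using False True by (simp add: delta_sum)
    qed (use False in simp)
  qed
  finally show ?thesis .
qed

lemma E2_entry: assumes "b < nbar2 R S" "d < R + nbar2 R S"
  shows "E2 R S $$ (b, d) = (if d < R then 0 else if b = d - R then 1 else 0)"
  using assms by (simp add: E2_def hstack_def)

lemma E2_col: assumes "d < R + nbar2 R S"
  shows "(\<Sum>b<nbar2 R S. E2 R S $$ (b, d) * g b) = (if d < R then 0 else g (d - R))"
proof -
  have "(\<Sum>b<nbar2 R S. E2 R S $$ (b, d) * g b) = (\<Sum>b<nbar2 R S. (if d < R then 0 else (if b = d - R then 1 else 0)) * g b)"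
    using assms by (intro sum.cong refl) (simp add: E2_entry)
  also have "\<dots> = (if d < R then 0 else g (d - R))" using assms by (simp add: delta_sum)
  finally show ?thesis .
qed

lemma E2_carrier: "E2 R S \<in> carrier_mat (nbar2 R S) (R + nbar2 R S)"
  by (simp add: E2_def hstack_def)


lemma jR_less: "i < (R::nat) \<Longrightarrow> j < m \<Longrightarrow> j*R + i < R * m"
  using idx_less[of j m i R] by (simp add: mult.commute)

lemma h1_formula:
  fixes h :: "real vec"
  assumes "i < R" "j + 1 < S" "k < T" "dim_vec h = T * (nbar2 R S + nbar1 R S)"
  shows "(transpose_mat (E011 R S T) *\<^sub>v h) $ (k*(R*(S-1)) + (j*R+i)) =
    (if j = 0 then (Ebar2 R 2 (i+1) - 1/3) * h $ (k*(nbar2 R S + nbar1 R S) + nbar2 R S)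
      + (Ebar2 R 3 (i+1) - 1/3) * h $ (k*(nbar2 R S + nbar1 R S) + (nbar2 R S + 1))
     else h $ (k*(nbar2 R S + nbar1 R S) + (nbar2 R S + (2 + i + 2*(j-1)*R))))" (is "_ = ?rhs")
proof -
  define V where "V = vstack (0\<^sub>m (nbar2 R S) (R * (S - 1))) (E01 R S)"
  have Vc: "V \<in> carrier_mat (nbar2 R S + nbar1 R S) (R * (S - 1))"
    by (simp add: V_def vstack_def E01_def)
  have d: "j*R+i < R*(S-1)" using assms by (intro jR_less) auto
  have E: "E011 R S T = kron (1\<^sub>m T) V" by (simp add: E011_def V_def)
  have "(transpose_mat (E011 R S T) *\<^sub>v h) $ (k*(R*(S-1)) + (j*R+i))
     = (\<Sum>e<T*(nbar2 R S + nbar1 R S). kron (1\<^sub>m T) V $$ (e, k*(R*(S-1)) + (j*R+i)) * h $ e)"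
    using assms d Vc unfolding E by (subst tmv_sum) (auto simp: idx_less)
  also have "\<dots> = (\<Sum>a<T. 1\<^sub>m T $$ (a,k) * (\<Sum>b<nbar2 R S + nbar1 R S. V $$ (b, j*R+i) * h $ (a*(nbar2 R S + nbar1 R S)+b)))"
    by (rule kron_col_sum[OF _ Vc assms(3) d]) simp
  also have "\<dots> = (\<Sum>b<nbar2 R S + nbar1 R S. V $$ (b, j*R+i) * h $ (k*(nbar2 R S + nbar1 R S)+b))"
    by (rule id_col_sum[OF assms(3)])
  also have "\<dots> = (\<Sum>b<nbar1 R S. E01 R S $$ (b, j*R+i) * h $ (k*(nbar2 R S + nbar1 R S)+(nbar2 R S + b)))"
    using vstack_col_sum[of "j*R+i" "0\<^sub>m (nbar2 R S) (R * (S - 1))" "E01 R S"] d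
    by (simp add: V_def E01_def)
  also have "\<dots> = ?rhs" by (subst E01_col[OF assms(1,2)]) simp
  finally show ?thesis .
qed

lemma h2_formula:
  fixes h :: "real vec"
  assumes "i < R" "j < S" "3 \<le> S" "k < T" "dim_vec h = T * (nbar2 R S + nbar1 R S)"
  shows "(transpose_mat (E101 R S T) *\<^sub>v h) $ (k*(R*S) + (j*R+i)) =
    - (if j = 1 then EbarD R 2 (i+1) * h $ (k*(nbar2 R S + nbar1 R S) + nbar2 R S)
      + EbarD R 3 (i+1) * h $ (k*(nbar2 R S + nbar1 R S) + (nbar2 R S + 1))
     else if 2 \<le> j then h $ (k*(nbar2 R S + nbar1 R S) + (nbar2 R S + (2 + i + (2*j-3)*R))) else 0)" (is "_ = ?rhs")
proof -
  define V where "V = vstack (0\<^sub>m (nbar2 R S) (R * S)) (- E10 R S)"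
  have Vc: "V \<in> carrier_mat (nbar2 R S + nbar1 R S) (R * S)"
    by (simp add: V_def vstack_def E10_def)
  have d: "j*R+i < R*S" using assms by (intro jR_less) auto
  have E: "E101 R S T = kron (1\<^sub>m T) V" by (simp add: E101_def V_def)
  have "(transpose_mat (E101 R S T) *\<^sub>v h) $ (k*(R*S) + (j*R+i))
     = (\<Sum>e<T*(nbar2 R S + nbar1 R S). kron (1\<^sub>m T) V $$ (e, k*(R*S) + (j*R+i)) * h $ e)"
    using assms d Vc unfolding E by (subst tmv_sum) (auto simp: idx_less)
  also have "\<dots> = (\<Sum>a<T. 1\<^sub>m T $$ (a,k) * (\<Sum>b<nbar2 R S + nbar1 R S. V $$ (b, j*R+i) * h $ (a*(nbar2 R S + nbar1 R S)+b)))"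
    by (rule kron_col_sum[OF _ Vc assms(4) d]) simp
  also have "\<dots> = (\<Sum>b<nbar2 R S + nbar1 R S. V $$ (b, j*R+i) * h $ (k*(nbar2 R S + nbar1 R S)+b))"
    by (rule id_col_sum[OF assms(4)])
  also have "\<dots> = (\<Sum>b<nbar1 R S. (- E10 R S) $$ (b, j*R+i) * h $ (k*(nbar2 R S + nbar1 R S)+(nbar2 R S + b)))"
    using vstack_col_sum[of "j*R+i" "0\<^sub>m (nbar2 R S) (R * S)" "- E10 R S"] d
    by (simp add: V_def E10_def)
  also have "\<dots> = - (\<Sum>b<nbar1 R S. E10 R S $$ (b, j*R+i) * h $ (k*(nbar2 R S + nbar1 R S)+(nbar2 R S + b)))"
    using d by (simp add: E10_def sum_negf[symmetric])
  also have "\<dots> = ?rhs" by (subst E10_col[OF assms(1,2,3)]) simp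
  finally show ?thesis .
qed

lemma h3_formula:
  fixes h :: "real vec"
  assumes "i < R" "j + 1 < S" "k < T" "dim_vec h = T * (nbar2 R S + nbar1 R S)" "R + nbar2 R S = R * (S - 1)"
  shows "(transpose_mat (E110 R S T) *\<^sub>v h) $ (k*(R*(S-1)) + (j*R+i)) =
    (if j = 0 then 0 else h $ (k*(nbar2 R S + nbar1 R S) + ((j-1)*R + i)))" (is "_ = ?rhs")
proof -
  define V where "V = vstack (E2 R S) (0\<^sub>m (nbar1 R S) (R * (S - 1)))"
  have Vc: "V \<in> carrier_mat (nbar2 R S + nbar1 R S) (R * (S - 1))"
    using assms(5) by (simp add: V_def vstack_def E2_def hstack_def)
  have d: "j*R+i < R*(S-1)" using assms by (intro jR_less) auto
  have E: "E110 R S T = kron (1\<^sub>m T) V" by (simp add: E110_def V_def)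
  have "(transpose_mat (E110 R S T) *\<^sub>v h) $ (k*(R*(S-1)) + (j*R+i))
     = (\<Sum>e<T*(nbar2 R S + nbar1 R S). kron (1\<^sub>m T) V $$ (e, k*(R*(S-1)) + (j*R+i)) * h $ e)"
    using assms d Vc unfolding E by (subst tmv_sum) (auto simp: idx_less)
  also have "\<dots> = (\<Sum>a<T. 1\<^sub>m T $$ (a,k) * (\<Sum>b<nbar2 R S + nbar1 R S. V $$ (b, j*R+i) * h $ (a*(nbar2 R S + nbar1 R S)+b)))"
    by (rule kron_col_sum[OF _ Vc assms(3) d]) simp
  also have "\<dots> = (\<Sum>b<nbar2 R S + nbar1 R S. V $$ (b, j*R+i) * h $ (k*(nbar2 R S + nbar1 R S)+b))"
    by (rule id_col_sum[OF assms(3)])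
  also have "\<dots> = (\<Sum>b<nbar2 R S. E2 R S $$ (b, j*R+i) * h $ (k*(nbar2 R S + nbar1 R S)+b))"
    using vstack_col_sum[of "j*R+i" "E2 R S" "0\<^sub>m (nbar1 R S) (R * (S - 1))"] d assms(5)
    by (simp add: V_def E2_def hstack_def)
  also have "\<dots> = ?rhs"
  proof (cases j)
    case 0
    then have "j*R+i < R" using assms(1) by simp
    then show ?thesis using d assms(5) 0 by (subst E2_col) simp_all
  next
    case (Suc j1)
    then have a: "\<not> j*R+i < R" "j*R+i - R = j1*R+i" by simp_all
    show ?thesis using d assms(5) Suc by (subst E2_col) (simp_all only: a if_False, simp)
  qed
  finally show ?thesis .
qed


lemma kron_carrier: "A \<in> carrier_mat n m \<Longrightarrow> B \<in> carrier_mat p q \<Longrightarrow> kron A B \<in> carrier_mat (n*p) (m*q)"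
  by (auto simp: kron_def)
lemma dim_Dper[simp]: "dim_row (Dper q) = q" "dim_col (Dper q) = q" by (simp_all add: Dper_def)
lemma dim_Ddiff[simp]: "dim_row (Ddiff q) = q - 1" "dim_col (Ddiff q) = q" by (simp_all add: Ddiff_def)
lemma Dper_carrier: "Dper q \<in> carrier_mat q q" by (simp add: Dper_def)
lemma Ddiff_carrier: "Ddiff q \<in> carrier_mat (q - 1) q" by (simp add: Ddiff_def)

lemma term1:
  fixes x :: "real vec"
  assumes "i < R" "j + 1 < S" "k < T" "dim_vec x = T * ((S-1)*R)"
  shows "(kron (1\<^sub>m T) (kron (1\<^sub>m (S-1)) (Dper R)) *\<^sub>v x) $ (k*((S-1)*R) + (j*R+i))
    = x $ (k*((S-1)*R) + (j*R + (if i+1 < R then i+1 else 0))) - x $ (k*((S-1)*R) + (j*R+i))"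
proof -
  have jl: "j < S - 1" using assms by simp
  have d: "j*R+i < (S-1)*R" using idx_less[OF jl assms(1)] .
  have Ic: "kron (1\<^sub>m (S-1)) (Dper R) \<in> carrier_mat ((S-1)*R) ((S-1)*R)" by (intro kron_carrier one_carrier_mat Dper_carrier)
  have "(kron (1\<^sub>m T) (kron (1\<^sub>m (S-1)) (Dper R)) *\<^sub>v x) $ (k*((S-1)*R) + (j*R+i))
      = (\<Sum>e<T*((S-1)*R). kron (1\<^sub>m T) (kron (1\<^sub>m (S-1)) (Dper R)) $$ (k*((S-1)*R) + (j*R+i), e) * x $ e)"
    using assms d by (subst mv_sum) (auto simp: idx_less)
  also have "\<dots> = (\<Sum>c<T. 1\<^sub>m T $$ (k,c) * (\<Sum>e<(S-1)*R. kron (1\<^sub>m (S-1)) (Dper R) $$ (j*R+i, e) * x $ (c*((S-1)*R)+e)))"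
    by (rule kron_row_sum[OF _ Ic assms(3) d, where g="\<lambda>e. x $ e"]) simp
  also have "\<dots> = (\<Sum>e<(S-1)*R. kron (1\<^sub>m (S-1)) (Dper R) $$ (j*R+i, e) * x $ (k*((S-1)*R)+e))"
    by (rule id_row_sum[OF assms(3), where g="\<lambda>c. (\<Sum>e<(S-1)*R. kron (1\<^sub>m (S-1)) (Dper R) $$ (j*R+i, e) * x $ (c*((S-1)*R)+e))"])
  also have "\<dots> = (\<Sum>c<S-1. 1\<^sub>m (S-1) $$ (j,c) * (\<Sum>e<R. Dper R $$ (i, e) * x $ (k*((S-1)*R)+(c*R+e))))"
    by (rule kron_row_sum[OF _ Dper_carrier jl assms(1), where g="\<lambda>e. x $ (k*((S-1)*R)+e)"]) simp
  also have "\<dots> = (\<Sum>e<R. Dper R $$ (i, e) * x $ (k*((S-1)*R)+(j*R+e)))"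
    by (rule id_row_sum[OF jl, where g="\<lambda>c. (\<Sum>e<R. Dper R $$ (i, e) * x $ (k*((S-1)*R)+(c*R+e)))"])
  also have "\<dots> = x $ (k*((S-1)*R) + (j*R + (if i+1 < R then i+1 else 0))) - x $ (k*((S-1)*R) + (j*R+i))"
    by (rule Dper_sum[OF assms(1), where g="\<lambda>e. x $ (k*((S-1)*R)+(j*R+e))"])
  finally show ?thesis .
qed

lemma term2:
  fixes x :: "real vec"
  assumes "i < R" "j + 1 < S" "k < T" "dim_vec x = T * (S*R)"
  shows "(kron (1\<^sub>m T) (kron (Ddiff S) (1\<^sub>m R)) *\<^sub>v x) $ (k*((S-1)*R) + (j*R+i))
    = x $ (k*(S*R) + ((j+1)*R + i)) - x $ (k*(S*R) + (j*R+i))"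
proof -
  have jl: "j < S - 1" using assms by simp
  have d: "j*R+i < (S-1)*R" using idx_less[OF jl assms(1)] .
  have Ic: "kron (Ddiff S) (1\<^sub>m R) \<in> carrier_mat ((S-1)*R) (S*R)" by (intro kron_carrier one_carrier_mat Ddiff_carrier)
  have "(kron (1\<^sub>m T) (kron (Ddiff S) (1\<^sub>m R)) *\<^sub>v x) $ (k*((S-1)*R) + (j*R+i))
      = (\<Sum>e<T*(S*R). kron (1\<^sub>m T) (kron (Ddiff S) (1\<^sub>m R)) $$ (k*((S-1)*R) + (j*R+i), e) * x $ e)"
    using assms d by (subst mv_sum) (auto simp: idx_less)
  also have "\<dots> = (\<Sum>c<T. 1\<^sub>m T $$ (k,c) * (\<Sum>e<S*R. kron (Ddiff S) (1\<^sub>m R) $$ (j*R+i, e) * x $ (c*(S*R)+e)))"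
    by (rule kron_row_sum[OF _ Ic assms(3) d, where g="\<lambda>e. x $ e"]) simp
  also have "\<dots> = (\<Sum>e<S*R. kron (Ddiff S) (1\<^sub>m R) $$ (j*R+i, e) * x $ (k*(S*R)+e))"
    by (rule id_row_sum[OF assms(3), where g="\<lambda>c. (\<Sum>e<S*R. kron (Ddiff S) (1\<^sub>m R) $$ (j*R+i, e) * x $ (c*(S*R)+e))"])
  also have "\<dots> = (\<Sum>c<S. Ddiff S $$ (j,c) * (\<Sum>e<R. 1\<^sub>m R $$ (i, e) * x $ (k*(S*R)+(c*R+e))))"
    by (rule kron_row_sum[OF Ddiff_carrier _ jl assms(1), where g="\<lambda>e. x $ (k*(S*R)+e)"]) simp
  also have "\<dots> = (\<Sum>c<S. Ddiff S $$ (j,c) * x $ (k*(S*R)+(c*R+i)))"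
  proof (intro sum.cong refl arg_cong2[where f="(*)"])
    fix c show "(\<Sum>e<R. 1\<^sub>m R $$ (i, e) * x $ (k*(S*R)+(c*R+e))) = x $ (k*(S*R)+(c*R+i))"
      by (rule id_row_sum[OF assms(1), where g="\<lambda>e. x $ (k*(S*R)+(c*R+e))"])
  qed
  also have "\<dots> = x $ (k*(S*R) + ((j+1)*R + i)) - x $ (k*(S*R) + (j*R+i))"
    by (rule Ddiff_sum[where g="\<lambda>c. x $ (k*(S*R)+(c*R+i))"]) (use assms in simp)
  finally show ?thesis .
qed

lemma term3:
  fixes x :: "real vec"
  assumes "i < R" "j + 1 < S" "k < T" "dim_vec x = T * ((S-1)*R)"
  shows "(kron (Dper T) (kron (1\<^sub>m (S-1)) (1\<^sub>m R)) *\<^sub>v x) $ (k*((S-1)*R) + (j*R+i))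
    = x $ ((if k+1 < T then k+1 else 0)*((S-1)*R) + (j*R+i)) - x $ (k*((S-1)*R) + (j*R+i))"
proof -
  have jl: "j < S - 1" using assms by simp
  have d: "j*R+i < (S-1)*R" using idx_less[OF jl assms(1)] .
  have Ic: "kron (1\<^sub>m (S-1)) (1\<^sub>m R) \<in> carrier_mat ((S-1)*R) ((S-1)*R)" by (intro kron_carrier one_carrier_mat)
  have "(kron (Dper T) (kron (1\<^sub>m (S-1)) (1\<^sub>m R)) *\<^sub>v x) $ (k*((S-1)*R) + (j*R+i))
      = (\<Sum>e<T*((S-1)*R). kron (Dper T) (kron (1\<^sub>m (S-1)) (1\<^sub>m R)) $$ (k*((S-1)*R) + (j*R+i), e) * x $ e)"
    using assms d by (subst mv_sum) (auto simp: idx_less)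
  also have "\<dots> = (\<Sum>c<T. Dper T $$ (k,c) * (\<Sum>e<(S-1)*R. kron (1\<^sub>m (S-1)) (1\<^sub>m R) $$ (j*R+i, e) * x $ (c*((S-1)*R)+e)))"
    by (rule kron_row_sum[OF Dper_carrier Ic assms(3) d, where g="\<lambda>e. x $ e"])
  also have "\<dots> = (\<Sum>c<T. Dper T $$ (k,c) * x $ (c*((S-1)*R)+(j*R+i)))"
  proof (intro sum.cong refl arg_cong2[where f="(*)"])
    fix c
    have "(\<Sum>e<(S-1)*R. kron (1\<^sub>m (S-1)) (1\<^sub>m R) $$ (j*R+i, e) * x $ (c*((S-1)*R)+e))
       = (\<Sum>c'<S-1. 1\<^sub>m (S-1) $$ (j,c') * (\<Sum>e<R. 1\<^sub>m R $$ (i, e) * x $ (c*((S-1)*R)+(c'*R+e))))"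
      by (rule kron_row_sum[OF _ _ jl assms(1), where g="\<lambda>e. x $ (c*((S-1)*R)+e)"]) simp_all
    also have "\<dots> = (\<Sum>c'<S-1. 1\<^sub>m (S-1) $$ (j,c') * x $ (c*((S-1)*R)+(c'*R+i)))"
    proof (intro sum.cong refl arg_cong2[where f="(*)"])
      fix c' show "(\<Sum>e<R. 1\<^sub>m R $$ (i, e) * x $ (c*((S-1)*R)+(c'*R+e))) = x $ (c*((S-1)*R)+(c'*R+i))"
        by (rule id_row_sum[OF assms(1), where g="\<lambda>e. x $ (c*((S-1)*R)+(c'*R+e))"])
    qed
    also have "\<dots> = x $ (c*((S-1)*R)+(j*R+i))"
      by (rule id_row_sum[OF jl, where g="\<lambda>c'. x $ (c*((S-1)*R)+(c'*R+i))"])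
    finally show "(\<Sum>e<(S-1)*R. kron (1\<^sub>m (S-1)) (1\<^sub>m R) $$ (j*R+i, e) * x $ (c*((S-1)*R)+e)) = x $ (c*((S-1)*R)+(j*R+i))" .
  qed
  also have "\<dots> = x $ ((if k+1 < T then k+1 else 0)*((S-1)*R) + (j*R+i)) - x $ (k*((S-1)*R) + (j*R+i))"
    by (rule Dper_sum[OF assms(3), where g="\<lambda>c. x $ (c*((S-1)*R)+(j*R+i))"])
  finally show ?thesis .
qed

lemma rhs_outer:
  fixes y :: "real vec"
  assumes "i < R" "j + 1 < S" "k < T" "dim_vec y = T * nbar2 R S" "R + nbar2 R S = R * (S - 1)"
  shows "(transpose_mat (E111 R S T) *\<^sub>v y) $ (k*(R*(S-1)) + (j*R+i))
    = (if j = 0 then 0 else y $ (k * nbar2 R S + ((j-1)*R + i)))"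
proof -
  have d: "j*R+i < R*(S-1)" using assms by (intro jR_less) auto
  have Ec: "E2 R S \<in> carrier_mat (nbar2 R S) (R*(S-1))" using assms(5) E2_carrier by metis
  have "(transpose_mat (E111 R S T) *\<^sub>v y) $ (k*(R*(S-1)) + (j*R+i))
     = (\<Sum>e<T*nbar2 R S. kron (1\<^sub>m T) (E2 R S) $$ (e, k*(R*(S-1)) + (j*R+i)) * y $ e)"
    using assms d Ec unfolding E111_def by (subst tmv_sum) (auto simp: idx_less)
  also have "\<dots> = (\<Sum>a<T. 1\<^sub>m T $$ (a,k) * (\<Sum>b<nbar2 R S. E2 R S $$ (b, j*R+i) * y $ (a*nbar2 R S+b)))"
    by (rule kron_col_sum[OF _ Ec assms(3) d]) simp
  also have "\<dots> = (\<Sum>b<nbar2 R S. E2 R S $$ (b, j*R+i) * y $ (k*nbar2 R S+b))"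
    by (rule id_col_sum[OF assms(3)])
  also have "\<dots> = (if j = 0 then 0 else y $ (k * nbar2 R S + ((j-1)*R + i)))"
  proof (cases j)
    case 0
    then have "j*R+i < R" using assms(1) by simp
    then show ?thesis using d assms(5) 0 by (subst E2_col) simp_all
  next
    case (Suc j1)
    then have a: "\<not> j*R+i < R" "j*R+i - R = j1*R+i" by simp_all
    show ?thesis using d assms(5) Suc by (subst E2_col) (simp_all only: a if_False, simp)
  qed
  finally show ?thesis .
qed


lemma delta_eval: "(\<Sum>q<(N::nat). (if e = q+1 then 1 else 0) * (x q::real)) = (if 1 \<le> e \<and> e \<le> N then x (e-1) else 0)"
proof (cases e)
  case 0 then show ?thesis by simp
next
  case (Suc e1)
  have "(\<Sum>q<N. (if e = q+1 then 1 else 0) * x q) = (\<Sum>q<N. (if q = e1 then 1 else 0) * x q)"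
    using Suc by (intro sum.cong) auto
  then show ?thesis using Suc by (simp add: delta_sum')
qed

lemma delta_eval': "(\<Sum>q<(N::nat). c * (if e = q+1 then 1 else 0) * (x q::real)) = c * (if 1 \<le> e \<and> e \<le> N then x (e-1) else 0)"
  unfolding mult.assoc sum_distrib_left[symmetric] delta_eval ..

lemma sum12: "(\<Sum>l\<in>{1..2::nat}. f l) = f 1 + (f 2 :: real)"
  by (simp add: numeral_2_eq_2)

lemma D2_lin: "(\<Sum>q<nn2 R S T. D2map R S T (\<lambda>p. if p = q+1 then 1 else 0) r * x q)
   = D2map R S T (\<lambda>p. if 1 \<le> p \<and> p \<le> nn2 R S T then x (p-1) else 0) r"
proof -
  define N where "N = nn2 R S T"
  define W where "W = (\<lambda>q::nat. if q > N then q - N else q)"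
  define b1 where "b1 = nbar1 R S"
  define b2 where "b2 = nbar2 R S"
  define k where "k = (r - 1) div b2 + 1"
  define rm where "rm = (r - 1) mod b2"
  define j where "j = rm div R + 1"
  define i where "i = rm mod R + 1"
  define c where "c = k * b2 + (k - 1) * b1"
  define d where "d = (k - 1) * (b1 + b2)"
  define d' where "d' = k * (b1 + b2)"
  define \<sigma> where "\<sigma> = (\<lambda>i. if i < R then i + 1 else 1)"
  have unf: "D2map R S T g r = (if j = 1 then
          g (W (2 + \<sigma> i + c)) - g (W (2 + i + c)) - g (W (2 + i + R + c))
          + (EbarD R 2 i * g (W (1 + c)) + EbarD R 3 i * g (W (2 + c)))
          + g (W (i + d')) - g (W (i + d))
        else
          g (W (2 + \<sigma> i + (2 * j - 2) * R + c)) - g (W (2 + i + (2 * j - 2) * R + c))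
          - g (W (2 + i + (2 * j - 1) * R + c)) + g (W (2 + i + (2 * j - 3) * R + c))
          + g (W (i + (j - 1) * R + d')) - g (W (i + (j - 1) * R + d)))" for g
    unfolding D2map_def Let_def sum12 N_def W_def b1_def b2_def k_def rm_def j_def i_def c_def d_def d'_def \<sigma>_def
    by (simp add: numeral_2_eq_2 numeral_3_eq_3)
  show ?thesis
  proof (cases "j = 1")
    case True
    show ?thesis unfolding unf if_P[OF True] N_def[symmetric]
      by (simp only: left_diff_distrib distrib_right sum.distrib sum_subtractf delta_eval delta_eval')
  next
    case False
    show ?thesis unfolding unf if_not_P[OF False] N_def[symmetric]
      by (simp only: left_diff_distrib distrib_right sum.distrib sum_subtractf delta_eval delta_eval')
  qed
qed

definition wrapN :: "nat \<Rightarrow> nat \<Rightarrow> nat" where "wrapN N e = (if e > N then e - N else e)"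

lemma D2_eval:
  assumes "i < R" "j0 + 2 < S" "k < T"
  shows "D2map R S T g (k * nbar2 R S + (j0*R + i) + 1) =
    (if j0 = 0 then
       g (wrapN (nn2 R S T) (3 + (if i+1 < R then i+1 else 0) + ((k+1)*nbar2 R S + k*nbar1 R S)))
     - g (wrapN (nn2 R S T) (3 + i + ((k+1)*nbar2 R S + k*nbar1 R S)))
     - g (wrapN (nn2 R S T) (3 + i + R + ((k+1)*nbar2 R S + k*nbar1 R S)))
     + (EbarD R 2 (i+1) * g (wrapN (nn2 R S T) (1 + ((k+1)*nbar2 R S + k*nbar1 R S)))
      + EbarD R 3 (i+1) * g (wrapN (nn2 R S T) (2 + ((k+1)*nbar2 R S + k*nbar1 R S))))
     + g (wrapN (nn2 R S T) (i + 1 + (k+1)*(nbar1 R S + nbar2 R S)))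
     - g (wrapN (nn2 R S T) (i + 1 + k*(nbar1 R S + nbar2 R S)))
     else
       g (wrapN (nn2 R S T) (3 + (if i+1 < R then i+1 else 0) + 2*j0*R + ((k+1)*nbar2 R S + k*nbar1 R S)))
     - g (wrapN (nn2 R S T) (3 + i + 2*j0*R + ((k+1)*nbar2 R S + k*nbar1 R S)))
     - g (wrapN (nn2 R S T) (3 + i + (2*j0+1)*R + ((k+1)*nbar2 R S + k*nbar1 R S)))
     + g (wrapN (nn2 R S T) (3 + i + (2*j0-1)*R + ((k+1)*nbar2 R S + k*nbar1 R S)))
     + g (wrapN (nn2 R S T) (i + 1 + j0*R + (k+1)*(nbar1 R S + nbar2 R S)))
     - g (wrapN (nn2 R S T) (i + 1 + j0*R + k*(nbar1 R S + nbar2 R S))))"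
proof -
  have lt: "j0*R + i < nbar2 R S"
  proof -
    have "j0*R + i < R*(S-2)" using assms by (intro jR_less) auto
    then show ?thesis by (simp add: nbar2_def)
  qed
  have f1: "(k * nbar2 R S + (j0*R + i) + 1 - 1) div nbar2 R S = k" using lt by simp
  have f2: "(k * nbar2 R S + (j0*R + i) + 1 - 1) mod nbar2 R S = j0*R + i" using lt by simp
  have f3: "(j0*R + i) div R = j0" "(j0*R + i) mod R = i" using assms by simp_all
  have s: "(if i + 1 < R then i + 1 + 1 else 1) = (if i+1 < R then i+1 else 0) + 1" by simp
  have e1: "2 * (j0 + 1) - 2 = 2*j0" "2 * (j0 + 1) - 1 = 2*j0+1" "2 * (j0 + 1) - 3 = 2*j0-1" by simp_all
  show ?thesis
    unfolding D2map_def Let_def f1 f2 f3 sum12 wrapN_def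
    by (simp add: s e1 numeral_2_eq_2 numeral_3_eq_3 algebra_simps)
qed



lemma D2_row:
  assumes "r < nn3 R S T" "dim_vec h = nn2 R S T"
  shows "(D2 R S T *\<^sub>v h) $ r = D2map R S T (\<lambda>p. if 1 \<le> p \<and> p \<le> nn2 R S T then h $ (p-1) else 0) (r+1)"
proof -
  have "(D2 R S T *\<^sub>v h) $ r = (\<Sum>q<nn2 R S T. D2 R S T $$ (r,q) * h $ q)"
    using assms by (subst mv_sum) (simp_all add: D2_def)
  also have "\<dots> = (\<Sum>q<nn2 R S T. D2map R S T (\<lambda>p. if p = q+1 then 1 else 0) (r+1) * h $ q)"
    using assms by (intro sum.cong refl) (simp add: D2_def)
  also have "\<dots> = D2map R S T (\<lambda>p. if 1 \<le> p \<and> p \<le> nn2 R S T then h $ (p-1) else 0) (r+1)"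
    by (rule D2_lin)
  finally show ?thesis .
qed

lemma Ebar2_wrap: "Ebar2 R l (R+1) = Ebar2 R l 1"
  by (simp add: Ebar2_def)

lemma hp: "1 \<le> e \<Longrightarrow> e \<le> N \<Longrightarrow> (\<lambda>p. if 1 \<le> p \<and> p \<le> N then h $ (p-1) else (0::real)) (wrapN N e) = h $ (e-1)"
  by (simp add: wrapN_def)

lemma hp_wrap: "N < e \<Longrightarrow> e = N + e' \<Longrightarrow> 1 \<le> e' \<Longrightarrow> e' \<le> N \<Longrightarrow> (\<lambda>p. if 1 \<le> p \<and> p \<le> N then h $ (p-1) else (0::real)) (wrapN N e) = h $ (e'-1)"
  by (simp add: wrapN_def)


theorem proposition3p5:
  fixes nr ns nt :: nat and h :: "real vec"
  assumes "nr \<ge> 1" and "ns \<ge> 3" and "nt \<ge> 1"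
    and "h \<in> carrier_vec (nn2 nr ns nt)"
  defines "h1 \<equiv> transpose_mat (E011 nr ns nt) *\<^sub>v h"
    and "h2 \<equiv> transpose_mat (E101 nr ns nt) *\<^sub>v h"
    and "h3 \<equiv> transpose_mat (E110 nr ns nt) *\<^sub>v h"
  shows "kron (1\<^sub>m nt) (kron (1\<^sub>m (ns - 1)) (Dper nr)) *\<^sub>v h1
         + kron (1\<^sub>m nt) (kron (Ddiff ns) (1\<^sub>m nr)) *\<^sub>v h2
         + kron (Dper nt) (kron (1\<^sub>m (ns - 1)) (1\<^sub>m nr)) *\<^sub>v h3
         = transpose_mat (E111 nr ns nt) *\<^sub>v (D2 nr ns nt *\<^sub>v h)"
proof -
  let ?b1 = "nbar1 nr ns" and ?b2 = "nbar2 nr ns" and ?N = "nn2 nr ns nt" and ?Q = "(ns-1)*nr"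
  let ?A1 = "kron (1\<^sub>m nt) (kron (1\<^sub>m (ns - 1)) (Dper nr))"
  let ?A2 = "kron (1\<^sub>m nt) (kron (Ddiff ns) (1\<^sub>m nr))"
  let ?A3 = "kron (Dper nt) (kron (1\<^sub>m (ns - 1)) (1\<^sub>m nr))"
  let ?m = "D2 nr ns nt *\<^sub>v h"
  have hd: "dim_vec h = nt * (?b2 + ?b1)" using assms(4) by (simp add: nn2_def add.commute)
  have RS: "nr + ?b2 = nr*(ns-1)"
  proof -
    have "ns - 1 = Suc (ns-2)" using assms(2) by simp
    then show ?thesis by (simp add: nbar2_def)
  qed
  have d1: "dim_vec h1 = nt * ?Q" by (simp add: h1_def E011_def vstack_def ac_simps)
  have d2: "dim_vec h2 = nt * (ns * nr)" by (simp add: h2_def E101_def vstack_def E10_def ac_simps)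
  have d3: "dim_vec h3 = nt * ?Q" using RS by (simp add: h3_def E110_def vstack_def E2_def hstack_def ac_simps)
  have dm: "dim_vec ?m = nt * ?b2" by (simp add: D2_def nn3_def)
  have dR: "dim_vec (transpose_mat (E111 nr ns nt) *\<^sub>v ?m) = nt * ?Q"
    using RS by (simp add: E111_def E2_def hstack_def ac_simps)
  show ?thesis
  proof (rule eq_vecI)
    show "dim_vec (?A1 *\<^sub>v h1 + ?A2 *\<^sub>v h2 + ?A3 *\<^sub>v h3) = dim_vec (transpose_mat (E111 nr ns nt) *\<^sub>v ?m)"
      using dR by simp
    fix p assume "p < dim_vec (transpose_mat (E111 nr ns nt) *\<^sub>v ?m)"
    then have p: "p < nt * ?Q" using dR by simp
    define k where "k = p div ?Q"
    define q where "q = p mod ?Q"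
    define j where "j = q div nr"
    define i where "i = q mod nr"
    have Qpos: "?Q > 0" using p by (cases "?Q = 0") auto
    have k: "k < nt" unfolding k_def using p by (simp add: less_mult_imp_div_less)
    have q: "q < ?Q" unfolding q_def using Qpos by simp
    have i: "i < nr" unfolding i_def using assms(1) by simp
    have j: "j + 1 < ns" using q unfolding j_def by (metis less_mult_imp_div_less less_diff_conv)
    have pe1: "q = j*nr + i" unfolding j_def i_def by (rule div_mult_mod_eq[symmetric])
    have pe2: "p = k*?Q + q" unfolding k_def q_def by (rule div_mult_mod_eq[symmetric])
    have pe: "p = k*?Q + (j*nr + i)" using pe1 pe2 by simp
    have Lsplit: "(?A1 *\<^sub>v h1 + ?A2 *\<^sub>v h2 + ?A3 *\<^sub>v h3) $ p = (?A1 *\<^sub>v h1) $ p + (?A2 *\<^sub>v h2) $ p + (?A3 *\<^sub>v h3) $ p"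
      using p by simp
    define \<sigma>' where "\<sigma>' = (if i+1 < nr then i+1 else 0)"
    have \<sigma>': "\<sigma>' < nr" using i assms(1) by (simp add: \<sigma>'_def)
    define \<tau> where "\<tau> = (if k+1 < nt then k+1 else 0)"
    have \<tau>: "\<tau> < nt" using k assms(3) by (simp add: \<tau>_def)
    have cQ: "\<And>x. x * ?Q = x * (nr * (ns - 1))" by (simp add: ac_simps)
    have cN: "\<And>x. x * (ns * nr) = x * (nr * ns)" by (simp add: ac_simps)
    have t1: "(?A1 *\<^sub>v h1) $ p = h1 $ (k*?Q + (j*nr + \<sigma>')) - h1 $ (k*?Q + (j*nr+i))"
      by (subst pe) (rule term1[OF i j k d1, folded \<sigma>'_def])
    have t2: "(?A2 *\<^sub>v h2) $ p = h2 $ (k*(ns*nr) + ((j+1)*nr + i)) - h2 $ (k*(ns*nr) + (j*nr+i))"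
      by (subst pe) (rule term2[OF i j k d2])
    have t3: "(?A3 *\<^sub>v h3) $ p = h3 $ (\<tau>*?Q + (j*nr+i)) - h3 $ (k*?Q + (j*nr+i))"
      by (subst pe) (rule term3[OF i j k d3, folded \<tau>_def])
    have rhs: "(transpose_mat (E111 nr ns nt) *\<^sub>v ?m) $ p = (if j = 0 then 0 else ?m $ (k * ?b2 + ((j-1)*nr + i)))"
      unfolding pe cQ by (rule rhs_outer[OF i j k dm RS])
    note h1f = h1_formula[OF _ j k, OF _ hd]
    note h2f = h2_formula[OF _ _ assms(2) k, OF _ _ hd]
    note h3f = h3_formula[OF i j _ _ RS, OF _ hd]
    show "(?A1 *\<^sub>v h1 + ?A2 *\<^sub>v h2 + ?A3 *\<^sub>v h3) $ p = (transpose_mat (E111 nr ns nt) *\<^sub>v ?m) $ p"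
    proof -
      have v1a: "h1 $ (k*?Q + (j*nr+\<sigma>')) = (if j = 0 then (Ebar2 nr 2 (\<sigma>'+1) - 1/3) * h $ (k*(?b2 + ?b1) + ?b2)
      + (Ebar2 nr 3 (\<sigma>'+1) - 1/3) * h $ (k*(?b2 + ?b1) + (?b2 + 1))
       else h $ (k*(?b2 + ?b1) + (?b2 + (2 + \<sigma>' + 2*(j-1)*nr))))" unfolding h1_def by (rule h1f[OF \<sigma>', folded cQ])
      have v1b: "h1 $ (k*?Q + (j*nr+i)) = (if j = 0 then (Ebar2 nr 2 (i+1) - 1/3) * h $ (k*(?b2 + ?b1) + ?b2)
      + (Ebar2 nr 3 (i+1) - 1/3) * h $ (k*(?b2 + ?b1) + (?b2 + 1))
       else h $ (k*(?b2 + ?b1) + (?b2 + (2 + i + 2*(j-1)*nr))))" unfolding h1_def by (rule h1f[OF i, folded cQ])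
      have v2a: "h2 $ (k*(ns*nr) + ((j+1)*nr+i)) = - (if j+1 = 1 then EbarD nr 2 (i+1) * h $ (k*(?b2 + ?b1) + ?b2)
      + EbarD nr 3 (i+1) * h $ (k*(?b2 + ?b1) + (?b2 + 1))
     else if 2 \<le> j+1 then h $ (k*(?b2 + ?b1) + (?b2 + (2 + i + (2*(j+1)-3)*nr))) else 0)"
        unfolding h2_def by (rule h2f[folded cN]) (use i j in simp_all)
      have v2b: "h2 $ (k*(ns*nr) + (j*nr+i)) = - (if j = 1 then EbarD nr 2 (i+1) * h $ (k*(?b2 + ?b1) + ?b2)
      + EbarD nr 3 (i+1) * h $ (k*(?b2 + ?b1) + (?b2 + 1))
     else if 2 \<le> j then h $ (k*(?b2 + ?b1) + (?b2 + (2 + i + (2*j-3)*nr))) else 0)"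
        unfolding h2_def by (rule h2f[folded cN]) (use i j in simp_all)
      have v3a: "h3 $ (\<tau>*?Q + (j*nr+i)) = (if j = 0 then 0 else h $ (\<tau>*(?b2 + ?b1) + ((j-1)*nr + i)))"
        unfolding h3_def by (rule h3f[OF \<tau>, folded cQ])
      have v3b: "h3 $ (k*?Q + (j*nr+i)) = (if j = 0 then 0 else h $ (k*(?b2 + ?b1) + ((j-1)*nr + i)))"
        unfolding h3_def by (rule h3f[OF k, folded cQ])
      show ?thesis
      proof (cases "j = 0")
        case True
        have E: "Ebar2 nr l (Suc \<sigma>') = Ebar2 nr l (Suc (Suc i))" for l
        proof (cases "i+1 < nr")
          case True then show ?thesis by (simp add: \<sigma>'_def)
        next
          case False then have "i + 1 = nr" using i by simp
          then show ?thesis using Ebar2_wrap[of nr l] False by (simp add: \<sigma>'_def)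
        qed
        show ?thesis unfolding Lsplit t1 t2 t3 rhs v1a v1b v2a v2b v3a v3b
          using True by (simp add: EbarD_def E algebra_simps)
      next
        case False
        define j0 where "j0 = j - 1"
        have jj: "j = j0 + 1" using False j0_def by simp
        have j0s: "j0 + 2 < ns" using j jj by simp
        define S0 where "S0 = ns - 3"
        have S0: "ns = S0 + 3" using assms(2) S0_def by simp
        have b1e: "?b1 = 2*(nr*S0) + 2*nr + 2" by (simp add: nbar1_def S0 algebra_simps)
        have b2e: "?b2 = nr*S0 + nr" by (simp add: nbar2_def S0 algebra_simps)
        have j0S0: "nr*j0 \<le> nr*S0" using j0s S0 by simp
        have lt2: "j0*nr + i < ?b2" using jR_less[of i nr j0 "ns-2"] i j0s by (simp add: nbar2_def)
        have Bk: "(k+1)*(?b1+?b2) \<le> ?N" unfolding nn2_def using k by (intro mult_le_mono1) simp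
        have BF1: "3 + i + 2*(j0*nr) + nr + ((k+1)*?b2 + k*?b1) \<le> ?N"
        proof -
          have a1: "j0*nr \<le> S0*nr" by (rule mult_le_mono1) (use j0s S0 in simp)
          have a2: "S0*nr = nr*S0" by (rule mult.commute)
          have "3 + i + 2*(j0*nr) + nr \<le> ?b1" unfolding b1e using i a1 a2 by linarith
          then have "3 + i + 2*(j0*nr) + nr + ((k+1)*?b2 + k*?b1) \<le> (k+1)*(?b1+?b2)" by (simp add: algebra_simps)
          then show ?thesis using Bk by linarith
        qed
        have BF2: "i + 1 + j0*nr + k*(?b1+?b2) \<le> ?N"
        proof -
          have "i + 1 + j0*nr + k*(?b1+?b2) \<le> (k+1)*(?b1+?b2)" using lt2 by (simp add: algebra_simps)
          then show ?thesis using Bk by linarith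
        qed
        define g where "g = (\<lambda>p. if 1 \<le> p \<and> p \<le> ?N then h $ (p-1) else (0::real))"
        have g: "\<And>e. 1 \<le> e \<Longrightarrow> e \<le> ?N \<Longrightarrow> g (wrapN ?N e) = h $ (e - 1)" by (simp add: g_def wrapN_def)
        have hdim: "dim_vec h = ?N" using assms(4) by simp
        have r_lt: "k*?b2 + (j0*nr+i) < nn3 nr ns nt" using idx_less[OF k lt2] by (simp add: nn3_def mult.commute)
        have M: "?m $ (k * ?b2 + ((j-1)*nr + i)) = D2map nr ns nt g (k*?b2 + (j0*nr+i) + 1)"
          using D2_row[OF r_lt hdim] by (simp add: g_def j0_def)
        note M2 = D2_eval[OF i j0s k, of g, folded \<sigma>'_def]
        have W3: "g (wrapN ?N (i + 1 + j0*nr + (k+1)*(?b1+?b2))) = h $ (\<tau>*(?b2 + ?b1) + (j0*nr + i))"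
        proof (cases "k+1 < nt")
          case True
          have "i + 1 + j0*nr + (k+1)*(?b1+?b2) \<le> (k+2)*(?b1+?b2)" using lt2 by (simp add: algebra_simps)
          also have "\<dots> \<le> ?N" unfolding nn2_def using True by (intro mult_le_mono1) simp
          finally show ?thesis using True by (subst g) (simp_all add: \<tau>_def algebra_simps)
        next
          case False
          then have kk: "k + 1 = nt" using k by simp
          have "?N < i + 1 + j0*nr + (k+1)*(?b1+?b2)" by (simp add: kk[symmetric] nn2_def)
          moreover have "i + 1 + j0*nr + (k+1)*(?b1+?b2) - ?N = i + 1 + j0*nr" by (simp add: kk[symmetric] nn2_def)
          moreover have "i + 1 + j0*nr \<le> ?N" using BF2 by simp
          ultimately show ?thesis using False by (simp add: g_def wrapN_def \<tau>_def add.commute)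
        qed
        note U = Lsplit t1 t2 t3 rhs v1a v1b v2a v2b v3a v3b if_not_P[OF False] M M2 W3
        have iB: "i < ?b1 + ?b2" using lt2 by simp
        show ?thesis
        proof (cases "k+1 < nt")
          case True
          have BF3: "i + 1 + j0*nr + (k+1)*(?b1+?b2) \<le> ?N"
          proof -
            have "i + 1 + j0*nr + (k+1)*(?b1+?b2) \<le> (k+2)*(?b1+?b2)" using lt2 by (simp add: algebra_simps)
            also have "\<dots> \<le> ?N" unfolding nn2_def using True by (intro mult_le_mono1) simp
            finally show ?thesis .
          qed
          show ?thesis unfolding U using False True BF1 BF2 BF3 \<sigma>'
            by (cases j0) (simp_all add: jj g \<tau>_def algebra_simps)
        next
          case False
          then have kk: "nt = k + 1" using k by simp
          have Wk: "x < ?b1 + ?b2 \<Longrightarrow> g (wrapN ?N (Suc (x + (?b1 + (?b2 + (k*?b1 + k*?b2)))))) = h $ x" for x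
            by (simp add: g_def wrapN_def kk nn2_def algebra_simps)
          show ?thesis unfolding U using \<open>j \<noteq> 0\<close> False BF1 BF2 iB \<sigma>'
            by (cases j0) (simp_all add: jj g Wk \<tau>_def algebra_simps)
        qed
      qed

    qed

  qed
qed

end
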